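(* Consider the real NEP $\mathcal{G}_{\rm siso}$. Then: (a) $\mathbf{p}$ is a NE of $\mathcal{G}_{\rm siso}$ iff it solves VI$(\mathcal{P}^{\rm siso},\mathbf{G})$, i.e. $\mathbf{p}\in\mathcal{P}^{\rm siso}$ and $(\mathbf{q}-\mathbf{p})^T\mathbf{G}(\mathbf{p})\ge0$ for all $\mathbf{q}\in\mathcal{P}^{\rm siso}$; and this solution set is nonempty and compact; (b) if $\mathbf{JG}_{\rm low}$ is positive semidefinite (resp. positive definite), then $\mathbf{G}$ is monotone (resp. strongly monotone) on $\mathcal{P}^{\rm siso}$; (c) if $\boldsymbol\Upsilon_{\mathbf{G}}$ is a P-matrix (resp. positive definite), then $\mathbf{G}$ is a uniformly P function (resp. strongly monotone) on $\mathcal{P}^{\rm siso}$, and $\mathcal{G}_{\rm siso}$ has a unique NE.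
   Context: There are $I$ users and $N$ subcarriers. Data: complex channel gains $H_{ij}(k)$ with $H_{ii}(k)\ne0$; noise powers $\sigma_i^2(k)>0$; budgets $P_i>0$; masks $\mathbf{p}_i^{\max}=(p_i^{\max}(k))_{k}\ge\mathbf{0}$; vectors $\mathbf{w}_i(k),\boldsymbol\alpha_i\in\mathbb{R}^m_+$. User $i$'s feasible set: $\mathcal{P}_i^{\rm siso}=\{\mathbf{p}_i\in\mathbb{R}^N:\sum_kp_i(k)\le P_i,\ \mathbf{0}\le\mathbf{p}_i\le\mathbf{p}_i^{\max},\ \sum_k\mathbf{w}_i(k)p_i(k)\le\boldsymbol\alpha_i\}$, $\mathcal{P}^{\rm siso}=\prod_i\mathcal{P}_i^{\rm siso}$. Rate $r_i(\mathbf{p}_i,\mathbf{p}_{-i})=\sum_{k=1}^N\log\big(1+\frac{|H_{ii}(k)|^2p_i(k)}{\sigma_i^2(k)+\sum_{j\ne i}|H_{ij}(k)|^2p_j(k)}\big)$. $\mathcal{G}_{\rm siso}$: each user $i$ maximizes $r_i(\mathbf{p}_i,\mathbf{p}_{-i})$ over $\mathbf{p}_i\in\mathcal{P}_i^{\rm siso}$; a NE is a feasible profile where no user can increase its rate unilaterally. $\mathbf{G}=(\mathbf{G}_i)_i$, $\mathbf{G}_i(\mathbf{p})=-\nabla_{\mathbf{p}_i}r_i(\mathbf{p})=\big(-\frac{|H_{ii}(k)|^2}{\sigma_i^2(k)+\sum_{j}|H_{ij}(k)|^2p_j(k)}\big)_{k=1}^N$. Let $\mathsf{innr}_{ij}(k)=\frac{\sigma_j^2(k)+\sum_r|H_{jr}(k)|^2p_r^{\max}(k)}{\sigma_i^2(k)}$.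 $\mathbf{JG}_{\rm low}$ is block diagonal with $N$ blocks $\mathbf{JG}_{\rm low}(k)\in\mathbb{R}^{I\times I}$, $[\mathbf{JG}_{\rm low}(k)]_{ii}=1$, $[\mathbf{JG}_{\rm low}(k)]_{ij}=-\frac{|H_{ij}(k)|^2}{|H_{jj}(k)|^2}\mathsf{innr}_{ij}(k)$ ($i\ne j$). $\boldsymbol\Upsilon_{\mathbf{G}}\in\mathbb{R}^{I\times I}$: $[\boldsymbol\Upsilon_{\mathbf{G}}]_{ii}=1$, $[\boldsymbol\Upsilon_{\mathbf{G}}]_{ij}=-\max_{1\le k\le N}\frac{|H_{ij}(k)|^2}{|H_{jj}(k)|^2}\mathsf{innr}_{ij}(k)$ ($i\ne j$). Monotone: $(\mathbf{p}-\mathbf{q})^T(\mathbf{G}(\mathbf{p})-\mathbf{G}(\mathbf{q}))\ge0$; strongly monotone: $\ge c\|\mathbf{p}-\mathbf{q}\|^2$, $c>0$; uniformly P: $\max_i(\mathbf{p}_i-\mathbf{q}_i)^T(\mathbf{G}_i(\mathbf{p})-\mathbf{G}_i(\mathbf{q}))\ge c\|\mathbf{p}-\mathbf{q}\|^2$, $c>0$. P-matrix: all principal minors positive. *)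

theory Defs
  imports "HOL-Analysis.Analysis"
begin

text \<open>Users are indexed by a finite type 'i, subcarriers by a finite type 'k,
  the extra linear constraints by a finite type 'm.  A power profile is
  p :: real^'k^'i, with p$i$k the power of user i on subcarrier k.
  H i j k is the complex channel gain, nz i k the noise power,
  Pt i the budget, pm i k the mask, w i k l and al i l the l-th components of
  the vectors w_i(k) and alpha_i.\<close>

definition user_set ::
  "real \<Rightarrow> ('k::finite \<Rightarrow> real) \<Rightarrow> ('k \<Rightarrow> 'm \<Rightarrow> real) \<Rightarrow> ('m \<Rightarrow> real) \<Rightarrow> (real^'k) set" where
  "user_set Pt pm w al =
     {x. (\<Sum>k\<in>UNIV. x$k) \<le> Pt \<and> (\<forall>k. 0 \<le> x$k \<and> x$k \<le> pm k)
         \<and> (\<forall>l. (\<Sum>k\<in>UNIV. w k l * x$k) \<le> al l)}"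

definition siso_set ::
  "('i::finite \<Rightarrow> real) \<Rightarrow> ('i \<Rightarrow> 'k::finite \<Rightarrow> real) \<Rightarrow> ('i \<Rightarrow> 'k \<Rightarrow> 'm \<Rightarrow> real)
     \<Rightarrow> ('i \<Rightarrow> 'm \<Rightarrow> real) \<Rightarrow> (real^'k^'i) set" where
  "siso_set Pt pm w al = {p. \<forall>i. p$i \<in> user_set (Pt i) (pm i) (w i) (al i)}"

definition rate ::
  "('i::finite \<Rightarrow> 'i \<Rightarrow> 'k::finite \<Rightarrow> complex) \<Rightarrow> ('i \<Rightarrow> 'k \<Rightarrow> real) \<Rightarrow> 'i \<Rightarrow> real^'k^'i \<Rightarrow> real" where
  "rate H nz i p =
     (\<Sum>k\<in>UNIV. ln (1 + (cmod (H i i k))\<^sup>2 * p$i$k /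
        (nz i k + (\<Sum>j\<in>UNIV-{i}. (cmod (H i j k))\<^sup>2 * p$j$k))))"

definition upd_user :: "real^'k^'i \<Rightarrow> 'i \<Rightarrow> real^'k \<Rightarrow> real^'k^'i" where
  "upd_user p i x = (\<chi> j. if j = i then x else p$j)"

definition is_NE ::
  "('i::finite \<Rightarrow> 'i \<Rightarrow> 'k::finite \<Rightarrow> complex) \<Rightarrow> ('i \<Rightarrow> 'k \<Rightarrow> real)
   \<Rightarrow> ('i \<Rightarrow> real) \<Rightarrow> ('i \<Rightarrow> 'k \<Rightarrow> real) \<Rightarrow> ('i \<Rightarrow> 'k \<Rightarrow> 'm \<Rightarrow> real) \<Rightarrow> ('i \<Rightarrow> 'm \<Rightarrow> real)
   \<Rightarrow> real^'k^'i \<Rightarrow> bool" where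
  "is_NE H nz Pt pm w al p \<longleftrightarrow>
     p \<in> siso_set Pt pm w al \<and>
     (\<forall>i. \<forall>x\<in>user_set (Pt i) (pm i) (w i) (al i).
        rate H nz i (upd_user p i x) \<le> rate H nz i p)"

text \<open>The map G = (-grad_{p_i} r_i)_i.\<close>
definition Gmap ::
  "('i::finite \<Rightarrow> 'i \<Rightarrow> 'k::finite \<Rightarrow> complex) \<Rightarrow> ('i \<Rightarrow> 'k \<Rightarrow> real) \<Rightarrow> real^'k^'i \<Rightarrow> real^'k^'i" where
  "Gmap H nz p = (\<chi> i k. - (cmod (H i i k))\<^sup>2 /
       (nz i k + (\<Sum>j\<in>UNIV. (cmod (H i j k))\<^sup>2 * p$j$k)))"

definition solves_VI :: "'a::real_inner set \<Rightarrow> ('a \<Rightarrow> 'a) \<Rightarrow> 'a \<Rightarrow> bool" where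
  "solves_VI S F p \<longleftrightarrow> p \<in> S \<and> (\<forall>q\<in>S. 0 \<le> (q - p) \<bullet> F p)"

definition monotone_map_on :: "'a::real_inner set \<Rightarrow> ('a \<Rightarrow> 'a) \<Rightarrow> bool" where
  "monotone_map_on S F \<longleftrightarrow> (\<forall>p\<in>S. \<forall>q\<in>S. 0 \<le> (p - q) \<bullet> (F p - F q))"

definition strongly_monotone_map_on :: "'a::real_inner set \<Rightarrow> ('a \<Rightarrow> 'a) \<Rightarrow> bool" where
  "strongly_monotone_map_on S F \<longleftrightarrow>
     (\<exists>c>0. \<forall>p\<in>S. \<forall>q\<in>S. c * (norm (p - q))\<^sup>2 \<le> (p - q) \<bullet> (F p - F q))"

definition uniformly_P_on :: "(real^'k^'i::finite) set \<Rightarrow> (real^'k^'i \<Rightarrow> real^'k^'i) \<Rightarrow> bool" where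
  "uniformly_P_on S F \<longleftrightarrow>
     (\<exists>c>0. \<forall>p\<in>S. \<forall>q\<in>S.
        c * (norm (p - q))\<^sup>2 \<le> (MAX i. (p$i - q$i) \<bullet> (F p $ i - F q $ i)))"

definition psd_mat :: "real^'n^'n \<Rightarrow> bool" where
  "psd_mat A \<longleftrightarrow> (\<forall>x. 0 \<le> x \<bullet> (A *v x))"

definition pd_mat :: "real^'n^'n \<Rightarrow> bool" where
  "pd_mat A \<longleftrightarrow> (\<forall>x. x \<noteq> 0 \<longrightarrow> 0 < x \<bullet> (A *v x))"

definition principal_minor :: "real^'n^'n \<Rightarrow> 'n set \<Rightarrow> real" where
  "principal_minor A S = (\<Sum>q | q permutes S. of_int (sign q) * (\<Prod>i\<in>S. A$i$(q i)))"

definition P_matrix :: "real^'n::finite^'n \<Rightarrow> bool" where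
  "P_matrix A \<longleftrightarrow> (\<forall>S. S \<noteq> {} \<longrightarrow> 0 < principal_minor A S)"

definition innr ::
  "('i::finite \<Rightarrow> 'i \<Rightarrow> 'k \<Rightarrow> complex) \<Rightarrow> ('i \<Rightarrow> 'k \<Rightarrow> real) \<Rightarrow> ('i \<Rightarrow> 'k \<Rightarrow> real)
   \<Rightarrow> 'i \<Rightarrow> 'i \<Rightarrow> 'k \<Rightarrow> real" where
  "innr H nz pm i j k =
     (nz j k + (\<Sum>r\<in>UNIV. (cmod (H j r k))\<^sup>2 * pm r k)) / nz i k"

definition JGlow_blk ::
  "('i::finite \<Rightarrow> 'i \<Rightarrow> 'k \<Rightarrow> complex) \<Rightarrow> ('i \<Rightarrow> 'k \<Rightarrow> real) \<Rightarrow> ('i \<Rightarrow> 'k \<Rightarrow> real)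
   \<Rightarrow> 'k \<Rightarrow> real^'i^'i" where
  "JGlow_blk H nz pm k = (\<chi> i j. if i = j then 1
      else - ((cmod (H i j k))\<^sup>2 / (cmod (H j j k))\<^sup>2) * innr H nz pm i j k)"

definition JGlow ::
  "('i::finite \<Rightarrow> 'i \<Rightarrow> 'k::finite \<Rightarrow> complex) \<Rightarrow> ('i \<Rightarrow> 'k \<Rightarrow> real) \<Rightarrow> ('i \<Rightarrow> 'k \<Rightarrow> real)
   \<Rightarrow> real^('i \<times> 'k)^('i \<times> 'k)" where
  "JGlow H nz pm = (\<chi> a b. if snd a = snd b
      then JGlow_blk H nz pm (snd a) $ fst a $ fst b else 0)"

definition Upsilon_G ::
  "('i::finite \<Rightarrow> 'i \<Rightarrow> 'k::finite \<Rightarrow> complex) \<Rightarrow> ('i \<Rightarrow> 'k \<Rightarrow> real) \<Rightarrow> ('i \<Rightarrow> 'k \<Rightarrow> real)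
   \<Rightarrow> real^'i^'i" where
  "Upsilon_G H nz pm = (\<chi> i j. if i = j then 1
      else - (MAX k. (cmod (H i j k))\<^sup>2 / (cmod (H j j k))\<^sup>2 * innr H nz pm i j k))"

end

theory Submission
  imports Defs
begin


lemma pm_empty: "principal_minor A {} = 1"
  by (simp add: principal_minor_def)

lemma P_matrix_all: "P_matrix A \<Longrightarrow> 0 < principal_minor A T"
  by (cases "T = {}") (auto simp: P_matrix_def pm_empty)

definition dupd :: "real^'n^'n \<Rightarrow> 'n \<Rightarrow> real \<Rightarrow> real^'n^'n" where
  "dupd A a c = (\<chi> i j. A$i$j + (if i = a \<and> j = a then c else 0))"

lemma permutes_minus_iff: "(q permutes T - {a}) \<longleftrightarrow> (q permutes T \<and> q a = a)"
proof
  assume q: "q permutes T - {a}"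
  then show "q permutes T \<and> q a = a"
    using permutes_subset[OF q] permutes_not_in[OF q] by auto
next
  assume "q permutes T \<and> q a = a"
  then show "q permutes T - {a}" using permutes_superset[of q T "T - {a}"] by auto
qed

lemma pm_dupd:
  fixes A :: "real^'n::finite^'n"
  shows "principal_minor (dupd A a c) T
     = principal_minor A T + (if a \<in> T then c * principal_minor A (T - {a}) else 0)"
proof (cases "a \<in> T")
  case False
  have "(\<Prod>i\<in>T. dupd A a c $ i $ q i) = (\<Prod>i\<in>T. A $ i $ q i)" for q
    by (intro prod.cong) (use False in \<open>auto simp: dupd_def\<close>)
  then show ?thesis using False by (simp add: principal_minor_def)
next
  case True
  have fin: "finite T" by simp
  have "(\<Prod>i\<in>T. dupd A a c $ i $ q i)
      = (\<Prod>i\<in>T. A $ i $ q i) + (if q a = a then c * (\<Prod>i\<in>T - {a}. A $ i $ q i) else 0)" for q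
  proof -
    have "(\<Prod>i\<in>T. dupd A a c $ i $ q i) = dupd A a c $ a $ q a * (\<Prod>i\<in>T - {a}. dupd A a c $ i $ q i)"
      using True by (simp add: prod.remove[OF fin True])
    also have "(\<Prod>i\<in>T - {a}. dupd A a c $ i $ q i) = (\<Prod>i\<in>T - {a}. A $ i $ q i)"
      by (intro prod.cong) (auto simp: dupd_def)
    also have "(\<Prod>i\<in>T. A $ i $ q i) = A $ a $ q a * (\<Prod>i\<in>T - {a}. A $ i $ q i)"
      using True by (simp add: prod.remove[OF fin True])
    ultimately show ?thesis by (simp add: dupd_def algebra_simps)
  qed
  then have "principal_minor (dupd A a c) T
     = principal_minor A T + (\<Sum>q | q permutes T. of_int (sign q) * (if q a = a then c * (\<Prod>i\<in>T - {a}. A $ i $ q i) else 0))"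
    by (simp add: principal_minor_def algebra_simps sum.distrib)
  also have "(\<Sum>q | q permutes T. of_int (sign q) * (if q a = a then c * (\<Prod>i\<in>T - {a}. A $ i $ q i) else 0))
     = (\<Sum>q | q permutes T \<and> q a = a. of_int (sign q) * (c * (\<Prod>i\<in>T - {a}. A $ i $ q i)))"
    using finite_permutations[OF fin]
    by (simp add: sum.inter_filter[symmetric] if_distrib[of "\<lambda>x. _ * x"] cong: if_cong)
  also have "\<dots> = c * principal_minor A (T - {a})"
    by (simp add: principal_minor_def permutes_minus_iff sum_distrib_left algebra_simps)
  finally show ?thesis using True by simp
qed

lemma P_diag:
  fixes A :: "real^'n::finite^'n"
  assumes P: "P_matrix A" and d: "\<And>i. 0 \<le> d i"
  shows "0 < principal_minor (\<chi> i j. A$i$j + (if i = j then d i else 0)) T"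
proof -
  have "\<forall>T. 0 < principal_minor (\<chi> i j. A$i$j + (if i = j \<and> i \<in> F then d i else 0)) T" if "finite F" for F
    using that
  proof (induction F rule: finite_induct)
    case empty
    have "(\<chi> i j. A$i$j + (if i = j \<and> i \<in> {} then d i else 0)) = A" by (simp add: vec_eq_iff)
    then show ?case using P_matrix_all[OF P] by simp
  next
    case (insert a F)
    let ?B = "(\<chi> i j. A$i$j + (if i = j \<and> i \<in> F then d i else 0))"
    have eq: "(\<chi> i j. A$i$j + (if i = j \<and> i \<in> insert a F then d i else 0)) = dupd ?B a (d a)"
      using insert.hyps(2) by (auto simp: vec_eq_iff dupd_def)
    show ?case
    proof
      fix T
      show "0 < principal_minor (\<chi> i j. A$i$j + (if i = j \<and> i \<in> insert a F then d i else 0)) T"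
      proof -
        have "0 < principal_minor ?B T" using insert.IH by simp
        moreover have "0 < principal_minor ?B (T - {a})" using insert.IH by simp
        then have "0 \<le> d a * principal_minor ?B (T - {a})"
          using d[of a] by simp
        ultimately have "0 < principal_minor ?B T" "0 \<le> d a * principal_minor ?B (T - {a})" by auto
        then show ?thesis unfolding eq pm_dupd by simp
      qed
    qed
  qed
  from this[of UNIV] show ?thesis by simp
qed

lemma det_embed:
  fixes B :: "real^'n::finite^'n"
  shows "det (\<chi> i j. if i \<in> T then (if j \<in> T then B$i$j else 0) else (if i = j then 1 else 0))
       = principal_minor B T"
proof -
  let ?M = "(\<chi> i j. if i \<in> T then (if j \<in> T then B$i$j else 0) else (if i = j then 1 else 0)) :: real^'n^'n"
  have pr: "(\<Prod>i\<in>UNIV. ?M $ i $ p i) = (if p permutes T then (\<Prod>i\<in>T. B $ i $ p i) else 0)"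
    if p: "p permutes UNIV" for p
  proof (cases "p permutes T")
    case True
    have "(\<Prod>i\<in>UNIV. ?M $ i $ p i) = (\<Prod>i\<in>T. ?M $ i $ p i)"
      by (rule prod.mono_neutral_right) (auto simp: permutes_not_in[OF True])
    also have "\<dots> = (\<Prod>i\<in>T. B $ i $ p i)"
      by (intro prod.cong) (auto simp: permutes_in_image[OF True])
    finally show ?thesis using True by simp
  next
    case False
    then obtain i where i: "i \<notin> T" "p i \<noteq> i"
      using permutes_superset[OF p, of T] by auto
    then have "(\<Prod>i\<in>UNIV. ?M $ i $ p i) = 0"
      by (intro prod_zero) (auto intro!: bexI[of _ i])
    then show ?thesis using False by simp
  qed
  have "det ?M = (\<Sum>p | p permutes UNIV. of_int (sign p) * (if p permutes T then (\<Prod>i\<in>T. B $ i $ p i) else 0))"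
    unfolding det_def
  proof (rule sum.cong[OF refl])
    fix p assume "p \<in> {p. p permutes (UNIV :: 'n set)}"
    then have p: "p permutes UNIV" by simp
    show "of_int (sign p) * (\<Prod>i\<in>UNIV. ?M $ i $ p i)
       = of_int (sign p) * (if p permutes T then (\<Prod>i\<in>T. B $ i $ p i) else 0)"
      by (simp only: pr[OF p])
  qed
  also have "\<dots> = (\<Sum>p | p permutes UNIV \<and> p permutes T. of_int (sign p) * (\<Prod>i\<in>T. B $ i $ p i))"
    using finite_permutations[of "UNIV :: 'n set"]
    by (simp add: sum.inter_filter[symmetric] if_distrib[of "\<lambda>x. _ * x"] cong: if_cong)
  also have "{p. p permutes UNIV \<and> p permutes T} = {p. p permutes T}"
    using permutes_subset by blast
  finally show ?thesis by (simp add: principal_minor_def)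
qed



lemma mvc: "(M *v V)$i = (\<Sum>j\<in>UNIV. M$i$j * V$j)" by (simp add: matrix_vector_mult_def)

lemma sign_nonrev:
  fixes A :: "real^'n::finite^'n"
  assumes P: "P_matrix A" and V0: "\<And>i. 0 \<le> V$i" and Vnz: "V \<noteq> 0"
  shows "\<exists>i. 0 < V$i * (A *v V)$i"
proof (rule ccontr)
  assume "\<not> ?thesis"
  then have np: "\<And>i. V$i * (A *v V)$i \<le> 0" by (simp add: not_less)
  define T where "T = {i. 0 < V$i}"
  define d where "d i = (if 0 < V$i then - (A *v V)$i / V$i else 0)" for i
  have d0: "0 \<le> d i" for i
  proof (cases "0 < V$i")
    case True
    then have "(A *v V)$i \<le> 0" using np[of i] by (simp add: mult_le_0_iff)
    then show ?thesis using True by (simp add: d_def divide_nonpos_pos)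
  qed (simp add: d_def)
  define B where "B = (\<chi> i j. A$i$j + (if i = j then d i else 0))"
  define M :: "real^'n^'n" where "M = (\<chi> i j. if i \<in> T then (if j \<in> T then B$i$j else 0) else (if i = j then 1 else 0))"
  have Vout: "i \<notin> T \<Longrightarrow> V$i = 0" for i using V0[of i] by (simp add: T_def)
  have MVi: "(M *v V)$i = 0$i" for i
    proof (cases "i \<in> T")
      case False
      have "(M *v V)$i = (\<Sum>j\<in>UNIV. (if i = j then V$j else 0))"
        unfolding mvc
        by (intro sum.cong refl) (use False in \<open>simp add: M_def\<close>)
      then show ?thesis using Vout[OF False] by simp
    next
      case True
      have "(M *v V)$i = (\<Sum>j\<in>UNIV. B$i$j * V$j)"
        unfolding mvc
        by (intro sum.cong refl) (use True Vout in \<open>simp add: M_def\<close>)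
      also have "\<dots> = (\<Sum>j\<in>UNIV. A$i$j * V$j) + d i * V$i"
        by (simp add: B_def distrib_right sum.distrib if_distrib[of "\<lambda>x. x * _"] cong: if_cong)
      also have "\<dots> = 0"
        using True by (simp add: d_def T_def matrix_vector_mult_def)
      finally show ?thesis by simp
    qed
  have MV: "M *v V = 0" using MVi by (simp add: vec_eq_iff)
  have "det M = principal_minor B T" unfolding M_def by (rule det_embed)
  also have "0 < \<dots>" unfolding B_def by (rule P_diag[OF P d0])
  finally have "det M \<noteq> 0" by simp
  then have "invertible M" by (simp add: invertible_det_nz)
  then obtain M' where "M' ** M = mat 1" by (auto simp: invertible_def)
  then have "\<forall>x. M *v x = 0 \<longrightarrow> x = 0" using matrix_left_invertible_ker by blast
  then show False using MV Vnz by blast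
qed

lemma P_uniform:
  fixes A :: "real^'n::finite^'n"
  assumes P: "P_matrix A"
  shows "\<exists>c>0. \<forall>V. (\<forall>i. 0 \<le> V$i) \<longrightarrow> (\<exists>i. c * (norm V)\<^sup>2 \<le> V$i * (A *v V)$i)"
proof -
  define K where "K = sphere (0::real^'n) 1 \<inter> {V. \<forall>i. 0 \<le> V$i}"
  define f where "f V = (\<Sum>i\<in>UNIV. max 0 (V$i * (\<Sum>j\<in>UNIV. A$i$j * V$j)))" for V :: "real^'n"
  have fA: "f V = (\<Sum>i\<in>UNIV. max 0 (V$i * (A *v V)$i))" for V
    by (simp add: f_def matrix_vector_mult_def)
  have cK: "compact K" unfolding K_def by (intro compact_Int_closed compact_sphere closed_positive_orthant)
  have "norm (axis (undefined::'n) (1::real)) = 1" by simp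
  moreover have "\<forall>i. 0 \<le> axis (undefined::'n) (1::real) $ i" by (simp add: axis_def)
  ultimately have "axis undefined 1 \<in> K" by (simp add: K_def)
  then have neK: "K \<noteq> {}" by blast
  have cf: "continuous_on K f" unfolding f_def by (intro continuous_intros)
  obtain V0 where V0: "V0 \<in> K" "\<And>V. V \<in> K \<Longrightarrow> f V0 \<le> f V"
    using continuous_attains_inf[OF cK neK cf] by blast
  have "V0 \<noteq> 0" using V0(1) by (auto simp: K_def)
  then obtain i0 where i0: "0 < V0$i0 * (A *v V0)$i0"
    using sign_nonrev[OF P, of V0] V0(1) by (auto simp: K_def)
  have c0: "0 < f V0" unfolding fA
    by (rule sum_pos2[of UNIV i0]) (use i0 in auto)
  define c where "c = f V0 / real CARD('n)"
  have cpos: "0 < c" using c0 by (simp add: c_def)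
  have "\<exists>i. c * (norm V)\<^sup>2 \<le> V$i * (A *v V)$i" if V: "\<forall>i. 0 \<le> V$i" for V
  proof (cases "V = 0")
    case True then show ?thesis by simp
  next
    case False
    define r where "r = norm V"
    have r: "0 < r" using False by (simp add: r_def)
    define U where "U = (1/r) *\<^sub>R V"
    have UK: "U \<in> K" using V r by (simp add: K_def U_def r_def)
    have VU: "V = r *\<^sub>R U" using r by (simp add: U_def)
    have "f V = r\<^sup>2 * f U"
    proof -
      have "max 0 (V$i * (A *v V)$i) = r\<^sup>2 * max 0 (U$i * (A *v U)$i)" for i
      proof -
        have "V$i * (A *v V)$i = r\<^sup>2 * (U$i * (A *v U)$i)"
          unfolding VU by (simp add: matrix_vector_mult_scaleR power2_eq_square)
        then show ?thesis using r by (cases "0 \<le> U$i * (A *v U)$i") (auto simp: max_def zero_le_mult_iff)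
      qed
      then show ?thesis unfolding fA by (simp add: sum_distrib_left)
    qed
    then have fV: "r\<^sup>2 * f V0 \<le> f V" using V0(2)[OF UK] r by simp
    show ?thesis
    proof (rule ccontr)
      assume "\<not> ?thesis"
      then have lt: "max 0 (V$i * (A *v V)$i) < c * r\<^sup>2" for i
        using cpos r by (auto simp: r_def not_le)
      have "f V < (\<Sum>i\<in>(UNIV::'n set). c * r\<^sup>2)" unfolding fA
        by (rule sum_strict_mono) (use lt in auto)
      also have "\<dots> = r\<^sup>2 * f V0" by (simp add: c_def)
      finally show False using fV by simp
    qed
  qed
  then show ?thesis using cpos by blast
qed

lemma pd_uniform:
  fixes A :: "real^'n::finite^'n"
  assumes P: "pd_mat A"
  shows "\<exists>c>0. \<forall>x. c * (norm x)\<^sup>2 \<le> x \<bullet> (A *v x)"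
proof -
  define K where "K = sphere (0::real^'n) 1"
  define f where "f x = (\<Sum>i\<in>UNIV. x$i * (\<Sum>j\<in>UNIV. A$i$j * x$j))" for x :: "real^'n"
  have fA: "f x = x \<bullet> (A *v x)" for x
    by (simp add: f_def matrix_vector_mult_def inner_vec_def)
  have cK: "compact K" unfolding K_def by (rule compact_sphere)
  have "axis undefined 1 \<in> K" by (simp add: K_def)
  then have neK: "K \<noteq> {}" by blast
  have cf: "continuous_on K f" unfolding f_def by (intro continuous_intros)
  obtain x0 where x0: "x0 \<in> K" "\<And>x. x \<in> K \<Longrightarrow> f x0 \<le> f x"
    using continuous_attains_inf[OF cK neK cf] by blast
  have "x0 \<noteq> 0" using x0(1) by (auto simp: K_def)
  then have c0: "0 < f x0" using P by (simp add: pd_mat_def fA)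
  have "f x0 * (norm x)\<^sup>2 \<le> x \<bullet> (A *v x)" for x
  proof (cases "x = 0")
    case True then show ?thesis by simp
  next
    case False
    define r where "r = norm x"
    have r: "0 < r" using False by (simp add: r_def)
    define u where "u = (1/r) *\<^sub>R x"
    have uK: "u \<in> K" using r by (simp add: K_def u_def r_def)
    have xu: "x = r *\<^sub>R u" using r by (simp add: u_def)
    have "x \<bullet> (A *v x) = r\<^sup>2 * f u"
      unfolding fA xu by (simp add: matrix_vector_mult_scaleR power2_eq_square)
    then show ?thesis using x0(2)[OF uK] r by (simp add: r_def mult.commute)
  qed
  then show ?thesis using c0 by blast
qed



locale siso =
  fixes H :: "'i::finite \<Rightarrow> 'i \<Rightarrow> 'k::finite \<Rightarrow> complex"
    and nz :: "'i \<Rightarrow> 'k \<Rightarrow> real"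
    and Pt :: "'i \<Rightarrow> real"
    and pm :: "'i \<Rightarrow> 'k \<Rightarrow> real"
    and w :: "'i \<Rightarrow> 'k \<Rightarrow> 'm::finite \<Rightarrow> real"
    and al :: "'i \<Rightarrow> 'm \<Rightarrow> real"
  assumes H_diag: "\<And>i k. H i i k \<noteq> 0"
    and sigma_pos: "\<And>i k. 0 < nz i k"
    and Pt_pos: "\<And>i. 0 < Pt i"
    and pm_nonneg: "\<And>i k. 0 \<le> pm i k"
    and w_nonneg: "\<And>i k l. 0 \<le> w i k l"
    and al_nonneg: "\<And>i l. 0 \<le> al i l"
begin

abbreviation "S \<equiv> siso_set Pt pm w al"
abbreviation "US i \<equiv> user_set (Pt i) (pm i) (w i) (al i)"
definition "h i j k = (cmod (H i j k))\<^sup>2"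
definition "Den p i k = nz i k + (\<Sum>j\<in>UNIV. h i j k * p$j$k)"
definition "Dmax i k = nz i k + (\<Sum>j\<in>UNIV. h i j k * pm j k)"

lemma h_nonneg: "0 \<le> h i j k" by (simp add: h_def)
lemma h_pos: "0 < h i i k" using H_diag by (simp add: h_def)

lemma inS: "p \<in> S \<longleftrightarrow> (\<forall>i. p$i \<in> US i)" by (simp add: siso_set_def)

lemma US_bounds: "x \<in> US i \<Longrightarrow> 0 \<le> x$k \<and> x$k \<le> pm i k"
  by (simp add: user_set_def)

lemma S_bounds: "p \<in> S \<Longrightarrow> 0 \<le> p$i$k \<and> p$i$k \<le> pm i k"
  using US_bounds inS by blast

lemma zero_US: "0 \<in> US i"
  using Pt_pos al_nonneg pm_nonneg by (simp add: user_set_def less_imp_le)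

lemma zero_S: "0 \<in> S" using zero_US inS by simp

lemma convex_US: "convex (US i)"
proof (rule convexI)
  fix x y u v assume x: "x \<in> US i" and y: "y \<in> US i" and u: "0 \<le> (u::real)" and v: "0 \<le> v" and uv: "u + v = 1"
  have "(\<Sum>k\<in>UNIV. (u *\<^sub>R x + v *\<^sub>R y)$k) = u * (\<Sum>k\<in>UNIV. x$k) + v * (\<Sum>k\<in>UNIV. y$k)"
    by (simp add: sum.distrib sum_distrib_left)
  also have "\<dots> \<le> u * Pt i + v * Pt i"
    using x y u v by (intro add_mono mult_left_mono) (auto simp: user_set_def)
  also have "\<dots> = (u + v) * Pt i" by (simp add: algebra_simps)
  finally have 1: "(\<Sum>k\<in>UNIV. (u *\<^sub>R x + v *\<^sub>R y)$k) \<le> Pt i" using uv by simp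
  have 2: "0 \<le> (u *\<^sub>R x + v *\<^sub>R y)$k \<and> (u *\<^sub>R x + v *\<^sub>R y)$k \<le> pm i k" for k
  proof -
    have "u * x$k + v * y$k \<le> u * pm i k + v * pm i k"
      using x y u v by (intro add_mono mult_left_mono) (auto simp: user_set_def)
    moreover have "0 \<le> u * x$k + v * y$k" using x y u v by (auto simp: user_set_def)
    moreover have "u * pm i k + v * pm i k = pm i k" using uv by (metis distrib_right mult_1)
    ultimately show ?thesis by simp
  qed
  have 3: "(\<Sum>k\<in>UNIV. w i k l * (u *\<^sub>R x + v *\<^sub>R y)$k) \<le> al i l" for l
  proof -
    have "(\<Sum>k\<in>UNIV. w i k l * (u *\<^sub>R x + v *\<^sub>R y)$k) = u * (\<Sum>k\<in>UNIV. w i k l * x$k) + v * (\<Sum>k\<in>UNIV. w i k l * y$k)"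
      by (simp add: sum.distrib sum_distrib_left algebra_simps)
    also have "\<dots> \<le> u * al i l + v * al i l"
      using x y u v by (intro add_mono mult_left_mono) (auto simp: user_set_def)
    also have "\<dots> = (u + v) * al i l" by (simp add: algebra_simps)
    finally show ?thesis using uv by simp
  qed
  show "u *\<^sub>R x + v *\<^sub>R y \<in> US i" using 1 2 3 by (simp add: user_set_def)
qed

lemma convex_S: "convex S"
proof (rule convexI)
  fix x y u v assume x: "x \<in> S" and y: "y \<in> S" and u: "0 \<le> (u::real)" and v: "0 \<le> v" and uv: "u + v = 1"
  show "u *\<^sub>R x + v *\<^sub>R y \<in> S" unfolding inS
    using convexD[OF convex_US, of "x$i" i "y$i" u v for i] x y u v uv by (auto simp: inS)
qed

lemma closed_US: "closed (US i)"
  unfolding user_set_def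
  by (intro closed_Collect_conj closed_Collect_all closed_Collect_le continuous_intros)

lemma closed_S: "closed S"
proof -
  have "S = (\<Inter>i. (\<lambda>p. p$i) -` US i)" by (auto simp: inS)
  also have "closed \<dots>"
    by (intro closed_INT ballI continuous_closed_vimage closed_US allI continuous_intros)
  finally show ?thesis .
qed

lemma inner_sq: "(p::real^'k^'i) \<bullet> p = (\<Sum>i\<in>UNIV. \<Sum>k\<in>UNIV. (p$i$k)\<^sup>2)"
  by (simp add: inner_vec_def power2_eq_square)

lemma bounded_S: "bounded S"
proof -
  have "norm p \<le> 1 + (\<Sum>i\<in>UNIV. \<Sum>k\<in>UNIV. (pm i k)\<^sup>2)" if "p \<in> S" for p
  proof -
    have "norm p \<le> 1 + (norm p)\<^sup>2"
    proof -
      have "0 \<le> (norm p - 1/2)\<^sup>2" by simp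
      then show ?thesis by (simp add: power2_eq_square algebra_simps)
    qed
    also have "(norm p)\<^sup>2 = (\<Sum>i\<in>UNIV. \<Sum>k\<in>UNIV. (p$i$k)\<^sup>2)"
      by (simp add: power2_norm_eq_inner inner_sq)
    also have "\<dots> \<le> (\<Sum>i\<in>UNIV. \<Sum>k\<in>UNIV. (pm i k)\<^sup>2)"
      using S_bounds[OF that] by (intro sum_mono power_mono) auto
    finally show ?thesis by simp
  qed
  then show ?thesis unfolding bounded_iff by blast
qed

lemma compact_S: "compact S"
  using bounded_S closed_S compact_eq_bounded_closed by blast

end


context siso begin

definition "Gc p = (\<chi> i k. - h i i k / max (nz i k) (Den p i k))"

lemma Den_bounds: assumes "p \<in> S" shows "nz i k \<le> Den p i k" "Den p i k \<le> Dmax i k"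
proof -
  show "nz i k \<le> Den p i k" unfolding Den_def
    using S_bounds[OF assms] h_nonneg by (auto intro!: sum_nonneg)
  show "Den p i k \<le> Dmax i k" unfolding Den_def Dmax_def
    using S_bounds[OF assms] h_nonneg by (auto intro!: sum_mono mult_left_mono)
qed

lemma Den_pos: "p \<in> S \<Longrightarrow> 0 < Den p i k"
  using Den_bounds(1) sigma_pos by (meson less_le_trans)

lemma Dmax_pos: "0 < Dmax i k"
  using Den_bounds(2)[OF zero_S, of i k] Den_pos[OF zero_S, of i k] by linarith

lemma Gmap_nth: "Gmap H nz p $ i $ k = - h i i k / Den p i k"
  by (simp add: Gmap_def Den_def h_def)

lemma Gmap_Gc: "p \<in> S \<Longrightarrow> Gmap H nz p = Gc p"
  using Den_bounds(1) by (simp add: vec_eq_iff Gmap_nth Gc_def max_def)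

lemma max_nz_ne: "max (nz i k) t \<noteq> 0"
  using sigma_pos[of i k] by (metis less_max_iff_disj less_irrefl)

lemma cont_Gc: "continuous_on A Gc"
  unfolding Gc_def Den_def
  by (intro continuous_intros) (simp add: max_nz_ne)

lemma VI_Gc: "solves_VI S (Gmap H nz) p \<longleftrightarrow> p \<in> S \<and> (\<forall>q\<in>S. 0 \<le> (q - p) \<bullet> Gc p)"
  unfolding solves_VI_def using Gmap_Gc by auto

lemma VI_exists: "\<exists>p. solves_VI S (Gmap H nz) p"
proof -
  let ?F = "\<lambda>p. closest_point S (p - Gc p)"
  have "continuous_on S ?F"
    by (intro continuous_on_compose2[OF continuous_on_closest_point[OF convex_S closed_S]] continuous_intros cont_Gc)
      (use zero_S in auto)
  moreover have "?F \<in> S \<rightarrow> S" using closest_point_in_set closed_S zero_S by blast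
  ultimately obtain p where p: "p \<in> S" "?F p = p"
    using brouwer[OF compact_S convex_S _] zero_S by blast
  have "0 \<le> (q - p) \<bullet> Gc p" if "q \<in> S" for q
    using closest_point_dot[OF convex_S closed_S that, of "p - Gc p"] p(2)
    by (simp add: inner_commute)
  then show ?thesis using p VI_Gc by blast
qed

lemma VI_compact: "compact {p. solves_VI S (Gmap H nz) p}"
proof -
  have "{p. solves_VI S (Gmap H nz) p} = S \<inter> (\<Inter>q\<in>S. {p. 0 \<le> (q - p) \<bullet> Gc p})"
    using VI_Gc by auto
  also have "compact \<dots>"
    by (intro compact_Int_closed compact_S closed_INT ballI closed_Collect_le continuous_intros cont_Gc)
  finally show ?thesis .
qed

end


lemma ln_lower: "0 < (U::real) \<Longrightarrow> 0 < V \<Longrightarrow> 1 - V / U \<le> ln (U / V)"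
  using ln_le_minus_one[of "V/U"] by (simp add: ln_div)

lemma ln_upper: "0 < (U::real) \<Longrightarrow> 0 < V \<Longrightarrow> ln (U / V) \<le> U / V - 1"
  using ln_le_minus_one[of "U/V"] by simp

context siso begin

definition "Bn p i k = nz i k + (\<Sum>j\<in>UNIV-{i}. h i j k * p$j$k)"

lemma Den_split: "Den p i k = Bn p i k + h i i k * p$i$k"
  unfolding Den_def Bn_def by (simp add: sum.remove[of UNIV i])

lemma upd_nth: "upd_user p i x $ j = (if j = i then x else p$j)"
  by (simp add: upd_user_def)

lemma Bn_upd: "Bn (upd_user p i x) i k = Bn p i k"
  unfolding Bn_def by (intro arg_cong2[where f="(+)"] refl sum.cong) (auto simp: upd_nth)

lemma Bn_pos: "p \<in> S \<Longrightarrow> 0 < Bn p i k"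
  unfolding Bn_def using S_bounds h_nonneg sigma_pos
  by (intro add_pos_nonneg sum_nonneg) auto

lemma upd_S: "p \<in> S \<Longrightarrow> x \<in> US i \<Longrightarrow> upd_user p i x \<in> S"
  by (auto simp: inS upd_nth)

lemma rate_eq: "rate H nz i p = (\<Sum>k\<in>UNIV. ln (1 + h i i k * p$i$k / Bn p i k))"
  by (simp add: rate_def h_def Bn_def)

lemma rate_diff:
  assumes p: "p \<in> S" and x: "x \<in> US i"
  shows "rate H nz i (upd_user p i x) - rate H nz i p
      = (\<Sum>k\<in>UNIV. ln ((Bn p i k + h i i k * x$k) / (Bn p i k + h i i k * p$i$k)))"
proof -
  have "ln (1 + h i i k * x$k / Bn p i k) - ln (1 + h i i k * p$i$k / Bn p i k)
      = ln ((Bn p i k + h i i k * x$k) / (Bn p i k + h i i k * p$i$k))" for k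
  proof -
    have B: "0 < Bn p i k" using Bn_pos[OF p] .
    have X: "0 \<le> h i i k * x$k" using US_bounds[OF x] h_nonneg by simp
    have P: "0 \<le> h i i k * p$i$k" using S_bounds[OF p] h_nonneg by simp
    have "1 + h i i k * x$k / Bn p i k = (Bn p i k + h i i k * x$k) / Bn p i k"
      "1 + h i i k * p$i$k / Bn p i k = (Bn p i k + h i i k * p$i$k) / Bn p i k"
      using B by (simp_all add: field_simps)
    then show ?thesis using B X P by (simp add: ln_div)
  qed
  then show ?thesis
    unfolding rate_eq by (simp add: Bn_upd upd_nth sum_subtractf[symmetric])
qed

lemma inner_upd: "(upd_user p i x - p) \<bullet> v = (x - p$i) \<bullet> (v$i)"
proof -
  have "(upd_user p i x - p) \<bullet> v = (\<Sum>j\<in>UNIV. (if j = i then (x - p$i) \<bullet> (v$i) else 0))"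
    unfolding inner_vec_def by (intro sum.cong) (auto simp: upd_nth)
  then show ?thesis by simp
qed

lemma VI_split: "solves_VI S G p \<longleftrightarrow> p \<in> S \<and> (\<forall>i. \<forall>x\<in>US i. 0 \<le> (x - p$i) \<bullet> (G p $ i))"
proof
  assume a: "solves_VI S G p"
  then have p: "p \<in> S" by (simp add: solves_VI_def)
  show "p \<in> S \<and> (\<forall>i. \<forall>x\<in>US i. 0 \<le> (x - p$i) \<bullet> (G p $ i))"
  proof (intro conjI p allI ballI)
    fix i x assume x: "x \<in> US i"
    have "0 \<le> (upd_user p i x - p) \<bullet> G p" using a upd_S[OF p x] by (simp add: solves_VI_def)
    then show "0 \<le> (x - p$i) \<bullet> (G p $ i)" by (simp add: inner_upd)
  qed
next
  assume a: "p \<in> S \<and> (\<forall>i. \<forall>x\<in>US i. 0 \<le> (x - p$i) \<bullet> (G p $ i))"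
  show "solves_VI S G p" unfolding solves_VI_def
  proof (intro conjI ballI)
    show "p \<in> S" using a by simp
    fix q assume q: "q \<in> S"
    have "(q - p) \<bullet> G p = (\<Sum>i\<in>UNIV. (q$i - p$i) \<bullet> (G p $ i))" by (simp add: inner_vec_def)
    also have "0 \<le> \<dots>" using a q by (intro sum_nonneg) (auto simp: inS)
    finally show "0 \<le> (q - p) \<bullet> G p" .
  qed
qed

lemma inner_G_i: "(x - p$i) \<bullet> (Gmap H nz p $ i) = - (\<Sum>k\<in>UNIV. h i i k * (x$k - p$i$k) / Den p i k)"
  by (simp add: inner_vec_def Gmap_nth sum_negf[symmetric] algebra_simps)

lemma VI_imp_NE:
  assumes "solves_VI S (Gmap H nz) p" shows "is_NE H nz Pt pm w al p"
proof -
  have p: "p \<in> S" and vi: "\<And>i x. x \<in> US i \<Longrightarrow> 0 \<le> (x - p$i) \<bullet> (Gmap H nz p $ i)"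
    using assms VI_split by blast+
  have "rate H nz i (upd_user p i x) \<le> rate H nz i p" if x: "x \<in> US i" for i x
  proof -
    have "rate H nz i (upd_user p i x) - rate H nz i p
      = (\<Sum>k\<in>UNIV. ln ((Bn p i k + h i i k * x$k) / (Bn p i k + h i i k * p$i$k)))"
      by (rule rate_diff[OF p x])
    also have "\<dots> \<le> (\<Sum>k\<in>UNIV. h i i k * (x$k - p$i$k) / Den p i k)"
    proof (rule sum_mono)
      fix k
      have B: "0 < Bn p i k" using Bn_pos[OF p] .
      have X: "0 \<le> h i i k * x$k" using US_bounds[OF x] h_nonneg by simp
      have P: "0 \<le> h i i k * p$i$k" using S_bounds[OF p] h_nonneg by simp
      have "ln ((Bn p i k + h i i k * x$k) / (Bn p i k + h i i k * p$i$k))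
          \<le> (Bn p i k + h i i k * x$k) / (Bn p i k + h i i k * p$i$k) - 1"
        using B X P by (intro ln_upper) auto
      also have "\<dots> = h i i k * (x$k - p$i$k) / Den p i k"
        using B P by (simp add: Den_split field_simps)
      finally show "ln ((Bn p i k + h i i k * x$k) / (Bn p i k + h i i k * p$i$k))
          \<le> h i i k * (x$k - p$i$k) / Den p i k" .
    qed
    also have "\<dots> \<le> 0" using vi[OF x] by (simp add: inner_G_i)
    finally show ?thesis by simp
  qed
  then show ?thesis using p by (simp add: is_NE_def)
qed

lemma NE_imp_VI:
  assumes ne: "is_NE H nz Pt pm w al p" shows "solves_VI S (Gmap H nz) p"
proof -
  have p: "p \<in> S" and opt: "\<And>i x. x \<in> US i \<Longrightarrow> rate H nz i (upd_user p i x) \<le> rate H nz i p"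
    using ne by (auto simp: is_NE_def)
  have "0 \<le> (x - p$i) \<bullet> (Gmap H nz p $ i)" if x: "x \<in> US i" for i x
  proof (rule ccontr)
    assume "\<not> ?thesis"
    then have s: "0 < (\<Sum>k\<in>UNIV. h i i k * (x$k - p$i$k) / Den p i k)"
      by (simp add: inner_G_i)
    define y where "y t = (1 - t) *\<^sub>R p$i + t *\<^sub>R x" for t
    define g where "g t = (\<Sum>k\<in>UNIV. h i i k * (x$k - p$i$k) / (Bn p i k + h i i k * ((1 - t) * p$i$k + t * x$k)))" for t
    have pi: "p$i \<in> US i" using p inS by blast
    have yU: "0 \<le> t \<Longrightarrow> t \<le> 1 \<Longrightarrow> y t \<in> US i" for t
      unfolding y_def using convexD_alt[OF convex_US pi x] by simp
    have g0: "g 0 = (\<Sum>k\<in>UNIV. h i i k * (x$k - p$i$k) / Den p i k)"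
      by (simp add: g_def Den_split)
    have "(g \<longlongrightarrow> g 0) (at_right 0)"
      unfolding g_def
      by (intro tendsto_intros) (use Bn_pos[OF p] S_bounds[OF p] h_nonneg in \<open>auto simp: add_pos_nonneg less_imp_neq[symmetric]\<close>)
    then have "\<forall>\<^sub>F t in at_right 0. 0 < g t" using s g0 by (intro order_tendstoD(1)) auto
    then obtain b where b: "b > 0" "\<And>t. t > 0 \<Longrightarrow> t < b \<Longrightarrow> 0 < g t"
      unfolding eventually_at_right_field by auto
    define t where "t = min (b/2) 1"
    have t: "0 < t" "t \<le> 1" "t < b" using b by (auto simp: t_def)
    have gt: "0 < g t" using b t by auto
    have yt: "y t \<in> US i" using yU t by simp
    have "t * g t \<le> rate H nz i (upd_user p i (y t)) - rate H nz i p"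
    proof -
      have "t * g t = (\<Sum>k\<in>UNIV. 1 - (Bn p i k + h i i k * p$i$k) / (Bn p i k + h i i k * (y t)$k))"
      proof -
        have "t * (h i i k * (x$k - p$i$k) / (Bn p i k + h i i k * ((1 - t) * p$i$k + t * x$k)))
          = 1 - (Bn p i k + h i i k * p$i$k) / (Bn p i k + h i i k * (y t)$k)" for k
        proof -
          have "0 < Bn p i k + h i i k * (y t)$k"
            using Bn_pos[OF p] US_bounds[OF yt] h_nonneg by (intro add_pos_nonneg) auto
          then show ?thesis by (simp add: y_def field_simps)
        qed
        then show ?thesis unfolding g_def sum_distrib_left by simp
      qed
      also have "\<dots> \<le> (\<Sum>k\<in>UNIV. ln ((Bn p i k + h i i k * (y t)$k) / (Bn p i k + h i i k * p$i$k)))"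
        using Bn_pos[OF p] US_bounds[OF yt] S_bounds[OF p] h_nonneg
        by (intro sum_mono ln_lower add_pos_nonneg) auto
      also have "\<dots> = rate H nz i (upd_user p i (y t)) - rate H nz i p"
        by (rule rate_diff[OF p yt, symmetric])
      finally show ?thesis .
    qed
    moreover have "0 < t * g t" using t gt by simp
    ultimately show False using opt[OF yt] by linarith
  qed
  then show ?thesis using p VI_split by blast
qed

end


lemma term_bound:
  fixes ai aj hh di dj Dm nzi xi xj :: real
  assumes "0 < ai" "0 < aj" "0 \<le> hh" "0 < nzi" "nzi \<le> di" "0 < dj" "dj \<le> Dm"
  shows "- (hh / aj) * (Dm / nzi) * \<bar>ai * xi / di\<bar> * \<bar>aj * xj / dj\<bar> \<le> xi * ai * hh * xj / di\<^sup>2"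
proof -
  define Y where "Y = (ai * xi / di) * (aj * xj / dj)"
  define c where "c = hh / aj * (dj / di)"
  define L where "L = hh / aj * (Dm / nzi)"
  have di: "0 < di" using assms by linarith
  have eq: "xi * ai * hh * xj / di\<^sup>2 = Y * c"
    unfolding Y_def c_def using assms(2,6) di by (simp add: field_simps power2_eq_square)
  have c0: "0 \<le> c" using assms di by (simp add: c_def)
  have "dj / di \<le> Dm / nzi"
    using assms by (intro frac_le) auto
  then have cL: "c \<le> L" using assms unfolding c_def L_def by (intro mult_left_mono) auto
  have "- \<bar>Y\<bar> * L \<le> - \<bar>Y\<bar> * c" using cL by (simp add: mult_left_mono)
  also have "- \<bar>Y\<bar> * c \<le> Y * c" using c0 by (intro mult_right_mono) auto
  finally have "- \<bar>Y\<bar> * L \<le> Y * c" .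
  moreover have "- (hh / aj) * (Dm / nzi) * \<bar>ai * xi / di\<bar> * \<bar>aj * xj / dj\<bar> = - \<bar>Y\<bar> * L"
    unfolding Y_def L_def by (simp add: abs_mult ac_simps)
  ultimately show ?thesis unfolding eq by simp
qed

context siso begin

definition "dd p q i k = sqrt (Den p i k * Den q i k)"
definition "yy p q i k = h i i k * (p$i$k - q$i$k) / dd p q i k"

lemma dd_bounds:
  assumes "p \<in> S" "q \<in> S" shows "nz i k \<le> dd p q i k" "dd p q i k \<le> Dmax i k"
proof -
  have a: "nz i k \<le> Den p i k" "nz i k \<le> Den q i k" "Den p i k \<le> Dmax i k" "Den q i k \<le> Dmax i k"
    using Den_bounds assms by auto
  have n: "0 \<le> nz i k" using sigma_pos[of i k] by simp
  have "sqrt (nz i k * nz i k) \<le> dd p q i k"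
    unfolding dd_def using a n by (intro real_sqrt_le_mono mult_mono) auto
  then show "nz i k \<le> dd p q i k" using n by simp
  have "dd p q i k \<le> sqrt (Dmax i k * Dmax i k)"
    unfolding dd_def using a n by (intro real_sqrt_le_mono mult_mono) auto
  then show "dd p q i k \<le> Dmax i k" using Dmax_pos[of i k] by simp
qed

lemma dd_pos: "p \<in> S \<Longrightarrow> q \<in> S \<Longrightarrow> 0 < dd p q i k"
  using dd_bounds(1) sigma_pos less_le_trans by blast

lemma dd_sq: "p \<in> S \<Longrightarrow> q \<in> S \<Longrightarrow> (dd p q i k)\<^sup>2 = Den p i k * Den q i k"
  unfolding dd_def using Den_pos by (simp add: less_imp_le)

lemma Gdiff:
  assumes "p \<in> S" "q \<in> S"
  shows "Gmap H nz p $ i $ k - Gmap H nz q $ i $ k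
     = h i i k * (\<Sum>j\<in>UNIV. h i j k * (p$j$k - q$j$k)) / (dd p q i k)\<^sup>2"
proof -
  have "Den p i k - Den q i k = (\<Sum>j\<in>UNIV. h i j k * (p$j$k - q$j$k))"
    by (simp add: Den_def sum_subtractf[symmetric] right_diff_distrib)
  moreover have "0 < Den p i k" "0 < Den q i k" using Den_pos assms by auto
  moreover have "- a / x - (- a / y) = a * (x - y) / (x * y)" if "0 < x" "0 < y" for a x y :: real
    using that by (simp add: field_simps)
  ultimately show ?thesis
    by (simp add: Gmap_nth dd_sq[OF assms])
qed

lemma T_bound:
  assumes p: "p \<in> S" and q: "q \<in> S"
  shows "(\<Sum>j\<in>UNIV. JGlow_blk H nz pm k $ i $ j * \<bar>yy p q i k\<bar> * \<bar>yy p q j k\<bar>)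
     \<le> (p$i$k - q$i$k) * (Gmap H nz p $ i $ k - Gmap H nz q $ i $ k)"
proof -
  have "(p$i$k - q$i$k) * (Gmap H nz p $ i $ k - Gmap H nz q $ i $ k)
     = (\<Sum>j\<in>UNIV. (p$i$k - q$i$k) * h i i k * h i j k * (p$j$k - q$j$k) / (dd p q i k)\<^sup>2)"
    unfolding Gdiff[OF p q] by (simp add: sum_distrib_left sum_divide_distrib mult.assoc)
  also have "(\<Sum>j\<in>UNIV. JGlow_blk H nz pm k $ i $ j * \<bar>yy p q i k\<bar> * \<bar>yy p q j k\<bar>) \<le> \<dots>"
  proof (rule sum_mono)
    fix j
    show "JGlow_blk H nz pm k $ i $ j * \<bar>yy p q i k\<bar> * \<bar>yy p q j k\<bar>
      \<le> (p$i$k - q$i$k) * h i i k * h i j k * (p$j$k - q$j$k) / (dd p q i k)\<^sup>2"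
    proof (cases "j = i")
      case True
      then show ?thesis
        by (simp add: JGlow_blk_def yy_def power2_eq_square mult_ac)
    next
      case False
      have e: "JGlow_blk H nz pm k $ i $ j = - (h i j k / h j j k) * (Dmax j k / nz i k)"
        using False by (simp add: JGlow_blk_def innr_def h_def Dmax_def)
      show ?thesis unfolding e yy_def
        by (rule term_bound) (use h_pos h_nonneg sigma_pos dd_bounds[OF p q] dd_pos[OF p q] in auto)
    qed
  qed
  finally show ?thesis .
qed

lemma yy_lower:
  assumes p: "p \<in> S" and q: "q \<in> S"
  shows "(h i i k / Dmax i k)\<^sup>2 * (p$i$k - q$i$k)\<^sup>2 \<le> (yy p q i k)\<^sup>2"
proof -
  have "(dd p q i k)\<^sup>2 \<le> (Dmax i k)\<^sup>2"
    using dd_bounds[OF p q, of i k] dd_pos[OF p q, of i k] by (intro power_mono) auto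
  have "(h i i k / Dmax i k)\<^sup>2 * (p$i$k - q$i$k)\<^sup>2 = (h i i k * (p$i$k - q$i$k))\<^sup>2 / (Dmax i k)\<^sup>2"
    by (simp add: power_divide power_mult_distrib)
  also have "\<dots> \<le> (h i i k * (p$i$k - q$i$k))\<^sup>2 / (dd p q i k)\<^sup>2"
    using \<open>(dd p q i k)\<^sup>2 \<le> (Dmax i k)\<^sup>2\<close> dd_pos[OF p q, of i k] Dmax_pos[of i k]
    by (intro divide_left_mono) auto
  also have "\<dots> = (yy p q i k)\<^sup>2" by (simp add: yy_def power_divide)
  finally show ?thesis .
qed

end


lemma sum_pair: "(\<Sum>x\<in>(UNIV::('a::finite\<times>'b::finite) set). f x) = (\<Sum>a\<in>UNIV. \<Sum>b\<in>UNIV. f (a,b))"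
proof -
  have "(\<Sum>a\<in>UNIV. \<Sum>b\<in>UNIV. f (a,b)) = (\<Sum>x\<in>UNIV \<times> UNIV. f x)"
    by (simp only: sum.cartesian_product case_prod_unfold prod.collapse)
  then show ?thesis by simp
qed
lemma delta_mult: "(\<Sum>l\<in>(UNIV::'a::finite set). (if k = l then a l else 0) * (b l::real)) = a k * b k"
proof -
  have "\<And>l. (if k = l then a l else 0) * b l = (if k = l then a l * b l else 0)" by simp
  then show ?thesis by (simp only:) simp
qed

context siso begin

lemma inner_GG: "(p - q) \<bullet> (Gmap H nz p - Gmap H nz q)
  = (\<Sum>i\<in>UNIV. \<Sum>k\<in>UNIV. (p$i$k - q$i$k) * (Gmap H nz p $ i $ k - Gmap H nz q $ i $ k))"
  by (simp add: inner_vec_def)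

lemma inner_GG_i: "(p$i - q$i) \<bullet> (Gmap H nz p $ i - Gmap H nz q $ i)
  = (\<Sum>k\<in>UNIV. (p$i$k - q$i$k) * (Gmap H nz p $ i $ k - Gmap H nz q $ i $ k))"
  by (simp add: inner_vec_def)

lemma quad_JGlow:
  fixes z :: "'i \<Rightarrow> 'k \<Rightarrow> real"
  shows "(\<chi> a. z (fst a) (snd a)) \<bullet> (JGlow H nz pm *v (\<chi> a. z (fst a) (snd a)))
     = (\<Sum>i\<in>UNIV. \<Sum>k\<in>UNIV. \<Sum>j\<in>UNIV. JGlow_blk H nz pm k $ i $ j * z i k * z j k)"
proof -
  let ?Z = "(\<chi> a. z (fst a) (snd a)) :: real^('i \<times> 'k)"
  have 1: "(JGlow H nz pm *v ?Z) $ (i, k) = (\<Sum>j\<in>UNIV. JGlow_blk H nz pm k $ i $ j * z j k)" for i k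
  proof -
    have "(JGlow H nz pm *v ?Z) $ (i, k) = (\<Sum>j\<in>UNIV. \<Sum>l\<in>UNIV. JGlow H nz pm $ (i,k) $ (j,l) * z j l)"
      by (simp add: mvc sum_pair)
    also have "\<dots> = (\<Sum>j\<in>UNIV. \<Sum>l\<in>UNIV. (if k = l then JGlow_blk H nz pm k $ i $ j else 0) * z j l)"
      by (intro sum.cong refl) (auto simp: JGlow_def)
    also have "\<dots> = (\<Sum>j\<in>UNIV. JGlow_blk H nz pm k $ i $ j * z j k)"
      by (simp only: delta_mult)
    finally show ?thesis .
  qed
  have "?Z \<bullet> (JGlow H nz pm *v ?Z) = (\<Sum>i\<in>UNIV. \<Sum>k\<in>UNIV. z i k * (JGlow H nz pm *v ?Z) $ (i, k))"
    by (simp add: inner_vec_def sum_pair)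
  also have "\<dots> = (\<Sum>i\<in>UNIV. \<Sum>k\<in>UNIV. \<Sum>j\<in>UNIV. JGlow_blk H nz pm k $ i $ j * z i k * z j k)"
    by (simp add: 1 sum_distrib_left mult_ac)
  finally show ?thesis .
qed

definition "mm = Min ((\<lambda>(i,k). (h i i k / Dmax i k)\<^sup>2) ` (UNIV :: ('i \<times> 'k) set))"

lemma mm_pos: "0 < mm"
proof -
  have "mm \<in> (\<lambda>(i,k). (h i i k / Dmax i k)\<^sup>2) ` (UNIV :: ('i \<times> 'k) set)"
    unfolding mm_def by (intro Min_in) auto
  then obtain i k where "mm = (h i i k / Dmax i k)\<^sup>2" by auto
  then show ?thesis using h_pos[of i k] Dmax_pos[of i k] by simp
qed

lemma mm_le: "mm \<le> (h i i k / Dmax i k)\<^sup>2"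
  unfolding mm_def by (rule Min_le) auto

lemma norm_sq: "(norm ((p::real^'k^'i) - q))\<^sup>2 = (\<Sum>i\<in>UNIV. \<Sum>k\<in>UNIV. (p$i$k - q$i$k)\<^sup>2)"
  unfolding power2_norm_eq_inner inner_sq by simp

lemma yy_sum:
  assumes p: "p \<in> S" and q: "q \<in> S"
  shows "mm * (norm (p - q))\<^sup>2 \<le> (\<Sum>i\<in>UNIV. \<Sum>k\<in>UNIV. (yy p q i k)\<^sup>2)"
proof -
  have "mm * (norm (p - q))\<^sup>2 = (\<Sum>i\<in>UNIV. \<Sum>k\<in>UNIV. mm * (p$i$k - q$i$k)\<^sup>2)"
    by (simp add: norm_sq sum_distrib_left)
  also have "\<dots> \<le> (\<Sum>i\<in>UNIV. \<Sum>k\<in>UNIV. (yy p q i k)\<^sup>2)"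
  proof (intro sum_mono)
    fix i k
    have "mm * (p$i$k - q$i$k)\<^sup>2 \<le> (h i i k / Dmax i k)\<^sup>2 * (p$i$k - q$i$k)\<^sup>2"
      using mm_le by (intro mult_right_mono) auto
    also have "\<dots> \<le> (yy p q i k)\<^sup>2" by (rule yy_lower[OF p q])
    finally show "mm * (p$i$k - q$i$k)\<^sup>2 \<le> (yy p q i k)\<^sup>2" .
  qed
  finally show ?thesis .
qed

lemma JG_lower:
  assumes p: "p \<in> S" and q: "q \<in> S"
  defines "Z \<equiv> (\<chi> a. \<bar>yy p q (fst a) (snd a)\<bar>) :: real^('i \<times> 'k)"
  shows "Z \<bullet> (JGlow H nz pm *v Z) \<le> (p - q) \<bullet> (Gmap H nz p - Gmap H nz q)"
    and "(norm Z)\<^sup>2 = (\<Sum>i\<in>UNIV. \<Sum>k\<in>UNIV. (yy p q i k)\<^sup>2)"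
proof -
  have "Z \<bullet> (JGlow H nz pm *v Z)
     = (\<Sum>i\<in>UNIV. \<Sum>k\<in>UNIV. \<Sum>j\<in>UNIV. JGlow_blk H nz pm k $ i $ j * \<bar>yy p q i k\<bar> * \<bar>yy p q j k\<bar>)"
    unfolding Z_def by (rule quad_JGlow)
  also have "\<dots> \<le> (p - q) \<bullet> (Gmap H nz p - Gmap H nz q)"
    unfolding inner_GG by (intro sum_mono T_bound[OF p q])
  finally show "Z \<bullet> (JGlow H nz pm *v Z) \<le> (p - q) \<bullet> (Gmap H nz p - Gmap H nz q)" .
  have "(norm Z)\<^sup>2 = (\<Sum>i\<in>UNIV. \<Sum>k\<in>UNIV. Z $ (i,k) * Z $ (i,k))"
    by (simp add: power2_norm_eq_inner inner_vec_def sum_pair)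
  also have "\<dots> = (\<Sum>i\<in>UNIV. \<Sum>k\<in>UNIV. (yy p q i k)\<^sup>2)"
    by (simp add: Z_def power2_eq_square)
  finally show "(norm Z)\<^sup>2 = (\<Sum>i\<in>UNIV. \<Sum>k\<in>UNIV. (yy p q i k)\<^sup>2)" .
qed

lemma part_b1: "psd_mat (JGlow H nz pm) \<Longrightarrow> monotone_map_on S (Gmap H nz)"
  unfolding monotone_map_on_def psd_mat_def
  using JG_lower(1) order_trans by blast

lemma part_b2: assumes "pd_mat (JGlow H nz pm)" shows "strongly_monotone_map_on S (Gmap H nz)"
proof -
  obtain c where c: "c > 0" "\<And>x. c * (norm x)\<^sup>2 \<le> x \<bullet> (JGlow H nz pm *v x)"
    using pd_uniform[OF assms] by blast
  have "c * mm * (norm (p - q))\<^sup>2 \<le> (p - q) \<bullet> (Gmap H nz p - Gmap H nz q)" if p: "p \<in> S" and q: "q \<in> S" for p q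
  proof -
    let ?Z = "(\<chi> a. \<bar>yy p q (fst a) (snd a)\<bar>) :: real^('i \<times> 'k)"
    have "c * mm * (norm (p - q))\<^sup>2 \<le> c * (\<Sum>i\<in>UNIV. \<Sum>k\<in>UNIV. (yy p q i k)\<^sup>2)"
      using yy_sum[OF p q] c(1) by (simp add: mult.assoc)
    also have "\<dots> = c * (norm ?Z)\<^sup>2" using JG_lower(2)[OF p q] by simp
    also have "\<dots> \<le> ?Z \<bullet> (JGlow H nz pm *v ?Z)" by (rule c(2))
    also have "\<dots> \<le> (p - q) \<bullet> (Gmap H nz p - Gmap H nz q)" by (rule JG_lower(1)[OF p q])
    finally show ?thesis .
  qed
  then show ?thesis unfolding strongly_monotone_map_on_def
    using c(1) mm_pos by (intro exI[of _ "c * mm"]) auto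
qed

end


context siso begin

definition "vv p q i = norm ((\<chi> k. yy p q i k) :: real^'k)"
definition "VV p q = (\<chi> i. vv p q i)"

lemma vv_sq: "(vv p q i)\<^sup>2 = (\<Sum>k\<in>UNIV. (yy p q i k)\<^sup>2)"
  unfolding vv_def power2_norm_eq_inner by (simp add: inner_vec_def power2_eq_square)

lemma vv_nonneg: "0 \<le> vv p q i" by (simp add: vv_def)

lemma cs: "(\<Sum>k\<in>UNIV. \<bar>yy p q i k\<bar> * \<bar>yy p q j k\<bar>) \<le> vv p q i * vv p q j"
proof -
  have n: "norm ((\<chi> k. \<bar>yy p q i k\<bar>) :: real^'k) = vv p q i" for i
    by (simp add: vv_def norm_eq_sqrt_inner inner_vec_def)
  have "(\<Sum>k\<in>UNIV. \<bar>yy p q i k\<bar> * \<bar>yy p q j k\<bar>)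
      = ((\<chi> k. \<bar>yy p q i k\<bar>) :: real^'k) \<bullet> (\<chi> k. \<bar>yy p q j k\<bar>)"
    by (simp add: inner_vec_def)
  also have "\<dots> \<le> norm ((\<chi> k. \<bar>yy p q i k\<bar>) :: real^'k) * norm ((\<chi> k. \<bar>yy p q j k\<bar>) :: real^'k)"
    by (rule norm_cauchy_schwarz)
  finally show ?thesis by (simp only: n)
qed

lemma innr_nonneg: "0 \<le> innr H nz pm i j k"
  unfolding innr_def using sigma_pos[of i k] sigma_pos[of j k] pm_nonneg
  by (intro divide_nonneg_pos add_nonneg_nonneg sum_nonneg mult_nonneg_nonneg) (auto intro: less_imp_le)

lemma Ups_le:
  assumes "j \<noteq> i"
  shows "Upsilon_G H nz pm $ i $ j \<le> JGlow_blk H nz pm k $ i $ j" "Upsilon_G H nz pm $ i $ j \<le> 0"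
proof -
  define L where "L k = (cmod (H i j k))\<^sup>2 / (cmod (H j j k))\<^sup>2 * innr H nz pm i j k" for k
  have U: "Upsilon_G H nz pm $ i $ j = - Max (range L)"
    using assms by (simp add: Upsilon_G_def L_def)
  have J: "JGlow_blk H nz pm k $ i $ j = - L k"
    using assms by (simp add: JGlow_blk_def L_def)
  have "L k \<le> Max (range L)" by (rule Max_ge) auto
  then show "Upsilon_G H nz pm $ i $ j \<le> JGlow_blk H nz pm k $ i $ j" using U J by simp
  have "0 \<le> L k" unfolding L_def using innr_nonneg by simp
  then show "Upsilon_G H nz pm $ i $ j \<le> 0" unfolding U using \<open>L k \<le> Max (range L)\<close> by linarith
qed

lemma per_user:
  assumes p: "p \<in> S" and q: "q \<in> S"
  shows "vv p q i * (Upsilon_G H nz pm *v VV p q) $ i \<le> (p$i - q$i) \<bullet> (Gmap H nz p $ i - Gmap H nz q $ i)"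
proof -
  have "vv p q i * (Upsilon_G H nz pm *v VV p q) $ i = (\<Sum>j\<in>UNIV. Upsilon_G H nz pm $ i $ j * vv p q i * vv p q j)"
    by (simp add: mvc VV_def sum_distrib_left mult_ac)
  also have "\<dots> \<le> (\<Sum>j\<in>UNIV. \<Sum>k\<in>UNIV. JGlow_blk H nz pm k $ i $ j * \<bar>yy p q i k\<bar> * \<bar>yy p q j k\<bar>)"
  proof (rule sum_mono)
    fix j
    show "Upsilon_G H nz pm $ i $ j * vv p q i * vv p q j
      \<le> (\<Sum>k\<in>UNIV. JGlow_blk H nz pm k $ i $ j * \<bar>yy p q i k\<bar> * \<bar>yy p q j k\<bar>)"
    proof (cases "j = i")
      case True
      have "vv p q i * vv p q i = (\<Sum>k\<in>UNIV. (yy p q i k)\<^sup>2)" using vv_sq[of p q i] by (simp add: power2_eq_square)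
      then show ?thesis using True by (simp add: Upsilon_G_def JGlow_blk_def power2_eq_square)
    next
      case False
      have "Upsilon_G H nz pm $ i $ j * vv p q i * vv p q j
          = Upsilon_G H nz pm $ i $ j * (vv p q i * vv p q j)" by simp
      also have "\<dots> \<le> Upsilon_G H nz pm $ i $ j * (\<Sum>k\<in>UNIV. \<bar>yy p q i k\<bar> * \<bar>yy p q j k\<bar>)"
        using Ups_le(2)[OF False] cs by (intro mult_left_mono_neg) auto
      also have "\<dots> = (\<Sum>k\<in>UNIV. Upsilon_G H nz pm $ i $ j * \<bar>yy p q i k\<bar> * \<bar>yy p q j k\<bar>)"
        by (simp add: sum_distrib_left mult.assoc)
      also have "\<dots> \<le> (\<Sum>k\<in>UNIV. JGlow_blk H nz pm k $ i $ j * \<bar>yy p q i k\<bar> * \<bar>yy p q j k\<bar>)"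
        using Ups_le(1)[OF False] by (intro sum_mono mult_right_mono) auto
      finally show ?thesis .
    qed
  qed
  also have "\<dots> = (\<Sum>k\<in>UNIV. \<Sum>j\<in>UNIV. JGlow_blk H nz pm k $ i $ j * \<bar>yy p q i k\<bar> * \<bar>yy p q j k\<bar>)"
    by (rule sum.swap)
  also have "\<dots> \<le> (p$i - q$i) \<bullet> (Gmap H nz p $ i - Gmap H nz q $ i)"
    unfolding inner_GG_i by (intro sum_mono T_bound[OF p q])
  finally show ?thesis .
qed

lemma VV_norm: "(norm (VV p q))\<^sup>2 = (\<Sum>i\<in>UNIV. \<Sum>k\<in>UNIV. (yy p q i k)\<^sup>2)"
proof -
  have "(norm (VV p q))\<^sup>2 = (\<Sum>i\<in>UNIV. (vv p q i)\<^sup>2)"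
    unfolding power2_norm_eq_inner by (simp add: inner_vec_def VV_def power2_eq_square)
  then show ?thesis by (simp only: vv_sq)
qed

lemma part_c_pd:
  assumes "pd_mat (Upsilon_G H nz pm)" shows "strongly_monotone_map_on S (Gmap H nz)"
proof -
  obtain c where c: "c > 0" "\<And>x. c * (norm x)\<^sup>2 \<le> x \<bullet> (Upsilon_G H nz pm *v x)"
    using pd_uniform[OF assms] by blast
  have "c * mm * (norm (p - q))\<^sup>2 \<le> (p - q) \<bullet> (Gmap H nz p - Gmap H nz q)" if p: "p \<in> S" and q: "q \<in> S" for p q
  proof -
    have "c * mm * (norm (p - q))\<^sup>2 \<le> c * (\<Sum>i\<in>UNIV. \<Sum>k\<in>UNIV. (yy p q i k)\<^sup>2)"
      using yy_sum[OF p q] c(1) by (simp add: mult.assoc)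
    also have "\<dots> = c * (norm (VV p q))\<^sup>2" by (simp add: VV_norm)
    also have "\<dots> \<le> VV p q \<bullet> (Upsilon_G H nz pm *v VV p q)" by (rule c(2))
    also have "\<dots> = (\<Sum>i\<in>UNIV. vv p q i * (Upsilon_G H nz pm *v VV p q) $ i)"
      by (simp add: inner_vec_def VV_def)
    also have "\<dots> \<le> (\<Sum>i\<in>UNIV. (p$i - q$i) \<bullet> (Gmap H nz p $ i - Gmap H nz q $ i))"
      by (intro sum_mono per_user[OF p q])
    also have "\<dots> = (p - q) \<bullet> (Gmap H nz p - Gmap H nz q)" by (simp add: inner_vec_def)
    finally show ?thesis .
  qed
  then show ?thesis unfolding strongly_monotone_map_on_def
    using c(1) mm_pos by (intro exI[of _ "c * mm"]) auto
qed

lemma part_c_P: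
  assumes "P_matrix (Upsilon_G H nz pm)" shows "uniformly_P_on S (Gmap H nz)"
proof -
  obtain c where c: "c > 0" "\<And>V. (\<forall>i. 0 \<le> V$i) \<Longrightarrow> \<exists>i. c * (norm V)\<^sup>2 \<le> V$i * (Upsilon_G H nz pm *v V)$i"
    using P_uniform[OF assms] by blast
  have "c * mm * (norm (p - q))\<^sup>2 \<le> (MAX i. (p$i - q$i) \<bullet> (Gmap H nz p $ i - Gmap H nz q $ i))"
    if p: "p \<in> S" and q: "q \<in> S" for p q
  proof -
    obtain i where i: "c * (norm (VV p q))\<^sup>2 \<le> VV p q $ i * (Upsilon_G H nz pm *v VV p q) $ i"
      using c(2)[of "VV p q"] by (auto simp: VV_def vv_nonneg)
    have "c * mm * (norm (p - q))\<^sup>2 \<le> c * (\<Sum>i\<in>UNIV. \<Sum>k\<in>UNIV. (yy p q i k)\<^sup>2)"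
      using yy_sum[OF p q] c(1) by (simp add: mult.assoc)
    also have "\<dots> = c * (norm (VV p q))\<^sup>2" by (simp add: VV_norm)
    also have "\<dots> \<le> vv p q i * (Upsilon_G H nz pm *v VV p q) $ i" using i by (simp add: VV_def)
    also have "\<dots> \<le> (p$i - q$i) \<bullet> (Gmap H nz p $ i - Gmap H nz q $ i)" by (rule per_user[OF p q])
    also have "\<dots> \<le> (MAX i. (p$i - q$i) \<bullet> (Gmap H nz p $ i - Gmap H nz q $ i))"
      by (rule Max_ge) auto
    finally show ?thesis .
  qed
  then show ?thesis unfolding uniformly_P_on_def
    using c(1) mm_pos by (intro exI[of _ "c * mm"]) auto
qed

lemma VI_pair:
  assumes "solves_VI S (Gmap H nz) p" "solves_VI S (Gmap H nz) q"
  shows "(p$i - q$i) \<bullet> (Gmap H nz p $ i - Gmap H nz q $ i) \<le> 0"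
proof -
  have pq: "p \<in> S" "q \<in> S" using assms by (auto simp: solves_VI_def)
  have "0 \<le> (q$i - p$i) \<bullet> (Gmap H nz p $ i)" using assms(1) pq(2) VI_split[of "Gmap H nz" p] inS by blast
  moreover have "0 \<le> (p$i - q$i) \<bullet> (Gmap H nz q $ i)" using assms(2) pq(1) VI_split[of "Gmap H nz" q] inS by blast
  moreover have "(q$i - p$i) \<bullet> (Gmap H nz p $ i) = - ((p$i - q$i) \<bullet> (Gmap H nz p $ i))"
    by (simp add: inner_diff_left)
  ultimately show ?thesis by (simp add: inner_diff_right)
qed

lemma uniq_P:
  assumes U: "uniformly_P_on S (Gmap H nz)"
    and a: "solves_VI S (Gmap H nz) p" "solves_VI S (Gmap H nz) q"
  shows "p = q"
proof -
  obtain c where c: "c > 0" "\<forall>p\<in>S. \<forall>q\<in>S. c * (norm (p - q))\<^sup>2 \<le> (MAX i. (p$i - q$i) \<bullet> (Gmap H nz p $ i - Gmap H nz q $ i))"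
    using U unfolding uniformly_P_on_def by blast
  have pq: "p \<in> S" "q \<in> S" using a by (auto simp: solves_VI_def)
  have "(MAX i. (p$i - q$i) \<bullet> (Gmap H nz p $ i - Gmap H nz q $ i)) \<le> 0"
    using VI_pair[OF a] by (simp add: Max_le_iff)
  then have "c * (norm (p - q))\<^sup>2 \<le> 0" using c pq by (meson order_trans)
  then show ?thesis using c(1) by (simp add: mult_le_0_iff)
qed

lemma uniq_strong:
  assumes U: "strongly_monotone_map_on S (Gmap H nz)"
    and a: "solves_VI S (Gmap H nz) p" "solves_VI S (Gmap H nz) q"
  shows "p = q"
proof -
  obtain c where c: "c > 0" "\<forall>p\<in>S. \<forall>q\<in>S. c * (norm (p - q))\<^sup>2 \<le> (p - q) \<bullet> (Gmap H nz p - Gmap H nz q)"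
    using U unfolding strongly_monotone_map_on_def by blast
  have pq: "p \<in> S" "q \<in> S" using a by (auto simp: solves_VI_def)
  have "0 \<le> (q - p) \<bullet> Gmap H nz p" "0 \<le> (p - q) \<bullet> Gmap H nz q" using a pq by (auto simp: solves_VI_def)
  moreover have "(q - p) \<bullet> Gmap H nz p = - ((p - q) \<bullet> Gmap H nz p)" by (simp add: inner_diff_left)
  ultimately have "(p - q) \<bullet> (Gmap H nz p - Gmap H nz q) \<le> 0" by (simp add: inner_diff_right)
  then have "c * (norm (p - q))\<^sup>2 \<le> 0" using c pq by (meson order_trans)
  then show ?thesis using c(1) by (simp add: mult_le_0_iff)
qed

lemma NE_iff: "is_NE H nz Pt pm w al p \<longleftrightarrow> solves_VI S (Gmap H nz) p"
  using NE_imp_VI VI_imp_NE by blast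

lemma ex1_NE:
  assumes "\<And>p q. solves_VI S (Gmap H nz) p \<Longrightarrow> solves_VI S (Gmap H nz) q \<Longrightarrow> p = q"
  shows "\<exists>!p. is_NE H nz Pt pm w al p"
  using VI_exists assms unfolding NE_iff by blast

lemma main:
  shows
    "(\<forall>p. is_NE H nz Pt pm w al p \<longleftrightarrow> solves_VI (siso_set Pt pm w al) (Gmap H nz) p)
     \<and> {p. solves_VI (siso_set Pt pm w al) (Gmap H nz) p} \<noteq> {}
     \<and> compact {p. solves_VI (siso_set Pt pm w al) (Gmap H nz) p}
     \<and> (psd_mat (JGlow H nz pm) \<longrightarrow> monotone_map_on (siso_set Pt pm w al) (Gmap H nz))
     \<and> (pd_mat (JGlow H nz pm) \<longrightarrow> strongly_monotone_map_on (siso_set Pt pm w al) (Gmap H nz))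
     \<and> (P_matrix (Upsilon_G H nz pm) \<longrightarrow>
          uniformly_P_on (siso_set Pt pm w al) (Gmap H nz) \<and> (\<exists>!p. is_NE H nz Pt pm w al p))
     \<and> (pd_mat (Upsilon_G H nz pm) \<longrightarrow>
          strongly_monotone_map_on (siso_set Pt pm w al) (Gmap H nz) \<and> (\<exists>!p. is_NE H nz Pt pm w al p))"
  using NE_iff VI_exists VI_compact part_b1 part_b2 part_c_P part_c_pd
    ex1_NE[OF uniq_P] ex1_NE[OF uniq_strong]
  by blast

end

theorem mainTheorem15:
  fixes H :: "'i::finite \<Rightarrow> 'i \<Rightarrow> 'k::finite \<Rightarrow> complex"
    and nz :: "'i \<Rightarrow> 'k \<Rightarrow> real"
    and Pt :: "'i \<Rightarrow> real"
    and pm :: "'i \<Rightarrow> 'k \<Rightarrow> real"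
    and w :: "'i \<Rightarrow> 'k \<Rightarrow> 'm::finite \<Rightarrow> real"
    and al :: "'i \<Rightarrow> 'm \<Rightarrow> real"
  assumes H_diag: "\<And>i k. H i i k \<noteq> 0"
    and sigma_pos: "\<And>i k. 0 < nz i k"
    and Pt_pos: "\<And>i. 0 < Pt i"
    and pm_nonneg: "\<And>i k. 0 \<le> pm i k"
    and w_nonneg: "\<And>i k l. 0 \<le> w i k l"
    and al_nonneg: "\<And>i l. 0 \<le> al i l"
  shows
    "(\<forall>p. is_NE H nz Pt pm w al p \<longleftrightarrow> solves_VI (siso_set Pt pm w al) (Gmap H nz) p)
     \<and> {p. solves_VI (siso_set Pt pm w al) (Gmap H nz) p} \<noteq> {}
     \<and> compact {p. solves_VI (siso_set Pt pm w al) (Gmap H nz) p}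
     \<and> (psd_mat (JGlow H nz pm) \<longrightarrow> monotone_map_on (siso_set Pt pm w al) (Gmap H nz))
     \<and> (pd_mat (JGlow H nz pm) \<longrightarrow> strongly_monotone_map_on (siso_set Pt pm w al) (Gmap H nz))
     \<and> (P_matrix (Upsilon_G H nz pm) \<longrightarrow>
          uniformly_P_on (siso_set Pt pm w al) (Gmap H nz) \<and> (\<exists>!p. is_NE H nz Pt pm w al p))
     \<and> (pd_mat (Upsilon_G H nz pm) \<longrightarrow>
          strongly_monotone_map_on (siso_set Pt pm w al) (Gmap H nz) \<and> (\<exists>!p. is_NE H nz Pt pm w al p))"
proof -
  interpret siso H nz Pt pm w al
    using assms by unfold_locales auto
  show ?thesis by (rule main)
qed

end
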